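(* Let $H$ be a Hilbert space, $A,B$ strictly positive bounded operators on $H$, $\mu\in\mathbb{R}$ and $\lambda>0$. Then, in the operator order, $$S_{\mu-2\lambda}(A|B)\le \tilde T_{\mu,2,-\lambda}(A|B)\le S_{\mu-\lambda}(A|B)\le \tilde T_{\mu,1,-\lambda}(A|B)\le S_\mu(A|B)$$ $$\le \tilde T_{\mu,1,\lambda}(A|B)\le S_{\mu+\lambda}(A|B)\le \tilde T_{\mu,2,\lambda}(A|B)\le S_{\mu+2\lambda}(A|B).$$
   Context: A bounded operator $T$ on $H$ is strictly positive ($T>0$) if $(Tx,x)\ge0$ for all $x$ and $T$ is invertible; $X\le Y$ means $((Y-X)x,x)\ge 0$ for all $x$. Powers and $\log$ of strictly positive operators are defined by functional calculus. For $A>0$, $B>0$ and $\nu\in\mathbb{R}$: $A\natural_\nu B=A^{1/2}(A^{-1/2}BA^{-1/2})^{\nu}A^{1/2}$, and the generalized relative operator entropy is $S_\nu(A|B)=A^{1/2}(A^{-1/2}BA^{-1/2})^{\nu}(\log A^{-1/2}BA^{-1/2})A^{1/2}$. For $\lambda,\mu\in\mathbb{R}$, $\lambda\ne 0$, $k\in\mathbb{Z}$, the generalized Tsallis relative operator entropy is $\tilde T_{\mu,k,\lambda}(A|B)=\dfrac{A\natural_{\mu+k\lambda}B-A\natural_{\mu+(k-1)\lambda}B}{\lambda}$. *)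

theory Defs
  imports "HOL-Analysis.Analysis" "HOL-Computational_Algebra.Polynomial"
begin

definition bl_invertible :: "('a::real_normed_vector \<Rightarrow>\<^sub>L 'a) \<Rightarrow> bool" where
  "bl_invertible T \<longleftrightarrow> (\<exists>S. T o\<^sub>L S = id_blinfun \<and> S o\<^sub>L T = id_blinfun)"

definition self_adjoint :: "('a::real_inner \<Rightarrow>\<^sub>L 'a) \<Rightarrow> bool" where
  "self_adjoint T \<longleftrightarrow> (\<forall>x y. inner (T x) y = inner x (T y))"

definition strictly_positive :: "('a::real_inner \<Rightarrow>\<^sub>L 'a) \<Rightarrow> bool" where
  "strictly_positive T \<longleftrightarrow> self_adjoint T \<and> (\<forall>x. inner (T x) x \<ge> 0) \<and> bl_invertible T"

definition op_le :: "('a::real_inner \<Rightarrow>\<^sub>L 'a) \<Rightarrow> ('a \<Rightarrow>\<^sub>L 'a) \<Rightarrow> bool" where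
  "op_le X Y \<longleftrightarrow> (\<forall>x. inner ((Y - X) x) x \<ge> 0)"

fun bl_pow :: "('a::real_normed_vector \<Rightarrow>\<^sub>L 'a) \<Rightarrow> nat \<Rightarrow> ('a \<Rightarrow>\<^sub>L 'a)" where
  "bl_pow T 0 = id_blinfun"
| "bl_pow T (Suc n) = T o\<^sub>L bl_pow T n"

definition poly_op :: "real poly \<Rightarrow> ('a::real_normed_vector \<Rightarrow>\<^sub>L 'a) \<Rightarrow> ('a \<Rightarrow>\<^sub>L 'a)" where
  "poly_op p T = (\<Sum>i\<le>degree p. coeff p i *\<^sub>R bl_pow T i)"

definition op_spectrum :: "('a::real_normed_vector \<Rightarrow>\<^sub>L 'a) \<Rightarrow> real set" where
  "op_spectrum T = {t. \<not> bl_invertible (T - t *\<^sub>R id_blinfun)}"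

definition fcalc :: "(real \<Rightarrow> real) \<Rightarrow> ('a::{real_inner,complete_space} \<Rightarrow>\<^sub>L 'a) \<Rightarrow> ('a \<Rightarrow>\<^sub>L 'a)" where
  "fcalc f T = (THE S. \<forall>p :: nat \<Rightarrow> real poly.
      uniform_limit (op_spectrum T) (\<lambda>n x. poly (p n) x) f sequentially \<longrightarrow>
      (\<lambda>n. poly_op (p n) T) \<longlonglongrightarrow> S)"

definition op_powr :: "('a::{real_inner,complete_space} \<Rightarrow>\<^sub>L 'a) \<Rightarrow> real \<Rightarrow> ('a \<Rightarrow>\<^sub>L 'a)" where
  "op_powr T r = fcalc (\<lambda>t. t powr r) T"

definition op_log :: "('a::{real_inner,complete_space} \<Rightarrow>\<^sub>L 'a) \<Rightarrow> ('a \<Rightarrow>\<^sub>L 'a)" where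
  "op_log T = fcalc ln T"

definition inner_op :: "('a::{real_inner,complete_space} \<Rightarrow>\<^sub>L 'a) \<Rightarrow> ('a \<Rightarrow>\<^sub>L 'a) \<Rightarrow> ('a \<Rightarrow>\<^sub>L 'a)" where
  "inner_op A B = op_powr A (-1/2) o\<^sub>L B o\<^sub>L op_powr A (-1/2)"

definition gmean :: "real \<Rightarrow> ('a::{real_inner,complete_space} \<Rightarrow>\<^sub>L 'a) \<Rightarrow> ('a \<Rightarrow>\<^sub>L 'a) \<Rightarrow> ('a \<Rightarrow>\<^sub>L 'a)" where
  "gmean \<nu> A B = op_powr A (1/2) o\<^sub>L op_powr (inner_op A B) \<nu> o\<^sub>L op_powr A (1/2)"

definition rel_entropy :: "real \<Rightarrow> ('a::{real_inner,complete_space} \<Rightarrow>\<^sub>L 'a) \<Rightarrow> ('a \<Rightarrow>\<^sub>L 'a) \<Rightarrow> ('a \<Rightarrow>\<^sub>L 'a)" where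
  "rel_entropy \<nu> A B = op_powr A (1/2) o\<^sub>L op_powr (inner_op A B) \<nu> o\<^sub>L op_log (inner_op A B) o\<^sub>L op_powr A (1/2)"

definition tsallis :: "real \<Rightarrow> int \<Rightarrow> real \<Rightarrow> ('a::{real_inner,complete_space} \<Rightarrow>\<^sub>L 'a) \<Rightarrow> ('a \<Rightarrow>\<^sub>L 'a) \<Rightarrow> ('a \<Rightarrow>\<^sub>L 'a)" where
  "tsallis \<mu> k lam A B = (1 / lam) *\<^sub>R (gmean (\<mu> + of_int k * lam) A B - gmean (\<mu> + (of_int k - 1) * lam) A B)"

end

theory Submission
  imports Defs "HOL-Computational_Algebra.Fundamental_Theorem_Algebra"
begin

lemma compose_id_apply:
  assumes "S o\<^sub>L S' = id_blinfun"
  shows "S (S' x) = x"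
proof -
  have "(S o\<^sub>L S') x = id_blinfun x" using assms by simp
  then show ?thesis by simp
qed

lemma bl_inv_comp:
  assumes "bl_invertible S" "bl_invertible T"
  shows "bl_invertible (S o\<^sub>L T)"
proof -
  obtain S' where S': "S o\<^sub>L S' = id_blinfun" "S' o\<^sub>L S = id_blinfun" using assms(1) unfolding bl_invertible_def by blast
  obtain T' where T': "T o\<^sub>L T' = id_blinfun" "T' o\<^sub>L T = id_blinfun" using assms(2) unfolding bl_invertible_def by blast
  have "(S o\<^sub>L T) o\<^sub>L (T' o\<^sub>L S') = id_blinfun"
    by (rule blinfun_eqI) (simp add: compose_id_apply[OF S'(1)] compose_id_apply[OF T'(1)])
  moreover have "(T' o\<^sub>L S') o\<^sub>L (S o\<^sub>L T) = id_blinfun"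
    by (rule blinfun_eqI) (simp add: compose_id_apply[OF S'(2)] compose_id_apply[OF T'(2)])
  ultimately show ?thesis unfolding bl_invertible_def by blast
qed

lemma bl_inv_lr:
  assumes "L o\<^sub>L R = id_blinfun" "R o\<^sub>L M = id_blinfun"
  shows "bl_invertible R"
proof -
  have "L = M"
  proof (rule blinfun_eqI)
    fix x
    have "L x = L (R (M x))" by (simp add: compose_id_apply[OF assms(2)])
    also have "\<dots> = M x" by (simp add: compose_id_apply[OF assms(1)])
    finally show "L x = M x" .
  qed
  then show ?thesis using assms unfolding bl_invertible_def by blast
qed

lemma bl_inv_trivial:
  fixes T :: "'a::real_normed_vector \<Rightarrow>\<^sub>L 'a"
  assumes "\<forall>x::'a. x = 0"
  shows "bl_invertible T"
  unfolding bl_invertible_def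
proof (intro exI[of _ T] conjI)
  have "T (T x) = x" for x
    using trans[OF spec[OF assms, of "T (T x)"] sym[OF spec[OF assms, of x]]] .
  then show "T o\<^sub>L T = id_blinfun" by (intro blinfun_eqI) simp
  then show "T o\<^sub>L T = id_blinfun" .
qed

lemma bl_inv_bounded_below:
  fixes T :: "'a::real_normed_vector \<Rightarrow>\<^sub>L 'a"
  assumes "bl_invertible T"
  shows "\<exists>c>0. \<forall>x. c * norm x \<le> norm (T x)"
proof -
  obtain S where S: "S o\<^sub>L T = id_blinfun" using assms unfolding bl_invertible_def by blast
  have h: "norm x \<le> (norm S + 1) * norm (T x)" for x
  proof -
    have "norm x = norm (S (T x))" by (simp add: compose_id_apply[OF S])
    also have "\<dots> \<le> norm S * norm (T x)" by (rule norm_blinfun)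
    also have "\<dots> \<le> (norm S + 1) * norm (T x)" by (simp add: mult_right_mono)
    finally show ?thesis .
  qed
  have p: "0 < norm S + 1" by (simp add: add_nonneg_pos)
  have "(1 / (norm S + 1)) * norm x \<le> norm (T x)" for x
  proof -
    have "(1 / (norm S + 1)) * norm x \<le> (1 / (norm S + 1)) * ((norm S + 1) * norm (T x))"
      using h[of x] p by (intro mult_left_mono) auto
    also have "\<dots> = norm (T x)" using p by simp
    finally show ?thesis .
  qed
  moreover have "0 < 1 / (norm S + 1)" using p by simp
  ultimately show ?thesis by blast
qed

lemma bl_inv_surj_below:
  fixes T :: "'a::real_normed_vector \<Rightarrow>\<^sub>L 'a"
  assumes surj: "\<And>y. \<exists>x. T x = y" and c: "c > 0" and below: "\<And>x. c * norm x \<le> norm (T x)"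
  shows "bl_invertible T"
proof -
  define g where "g y = (SOME x. T x = y)" for y
  have Tg: "T (g y) = y" for y unfolding g_def by (rule someI_ex[OF surj])
  have inj: "x = x'" if "T x = T x'" for x x'
  proof -
    from that have "T (x - x') = 0" by (simp add: blinfun.diff_right)
    then have "c * norm (x - x') \<le> 0" using below[of "x - x'"] by simp
    then show "x = x'" using c by (simp add: mult_le_0_iff)
  qed
  have bl: "bounded_linear g"
  proof (rule bounded_linear_intro[where K="1/c"])
    show "g (x + y) = g x + g y" for x y
      by (rule inj) (simp only: Tg blinfun.add_right)
    show "g (r *\<^sub>R x) = r *\<^sub>R g x" for r x
      by (rule inj) (simp only: Tg blinfun.scaleR_right)
    show "norm (g x) \<le> norm x * (1 / c)" for x
    proof -
      have "c * norm (g x) \<le> norm x" using below[of "g x"] by (simp only: Tg)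
      then show ?thesis using c by (simp add: pos_le_divide_eq mult.commute)
    qed
  qed
  have "T o\<^sub>L Blinfun g = id_blinfun"
    by (rule blinfun_eqI) (simp add: bounded_linear_Blinfun_apply[OF bl] Tg)
  moreover have "Blinfun g o\<^sub>L T = id_blinfun"
    by (rule blinfun_eqI) (simp add: bounded_linear_Blinfun_apply[OF bl], rule inj, simp add: Tg)
  ultimately show ?thesis unfolding bl_invertible_def by blast
qed


lemma sa_inner: "self_adjoint T \<Longrightarrow> inner (T x) y = inner x (T y)"
  unfolding self_adjoint_def by blast

lemma pos_cs:
  fixes P :: "'a::real_inner \<Rightarrow>\<^sub>L 'a"
  assumes sa: "self_adjoint P" and pos: "\<And>x. 0 \<le> inner (P x) x"
  shows "(inner (P x) y)^2 \<le> inner (P x) x * inner (P y) y"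
proof -
  define a where "a = inner (P x) x"
  define b where "b = inner (P x) y"
  define c where "c = inner (P y) y"
  have byx: "inner (P y) x = b" unfolding b_def using sa_inner[OF sa, of y x] by (simp add: inner_commute)
  have quad: "0 \<le> a + 2 * t * b + t^2 * c" for t
  proof -
    have "0 \<le> inner (P (x + t *\<^sub>R y)) (x + t *\<^sub>R y)" by (rule pos)
    also have "\<dots> = a + t * inner (P y) x + t * b + t * t * c"
      by (simp add: a_def b_def c_def blinfun.add_right blinfun.scaleR_right inner_add_left inner_add_right algebra_simps)
    also have "\<dots> = a + 2 * t * b + t^2 * c" by (simp add: byx power2_eq_square algebra_simps)
    finally show ?thesis .
  qed
  have c0: "0 \<le> c" unfolding c_def by (rule pos)
  show ?thesis
  proof (cases "c = 0")
    case True
    have "b = 0"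
    proof (rule ccontr)
      assume "b \<noteq> 0"
      have "0 \<le> a + 2 * (-(a+1)/(2*b)) * b + (-(a+1)/(2*b))^2 * c" by (rule quad)
      also have "\<dots> = -1" using \<open>b \<noteq> 0\<close> True by (simp add: field_simps)
      finally show False by simp
    qed
    then show ?thesis using True by (simp add: a_def b_def c_def)
  next
    case False
    then have cp: "c > 0" using c0 by simp
    have "0 \<le> a + 2 * (-b/c) * b + (-b/c)^2 * c" by (rule quad)
    also have "\<dots> = a - b^2 / c" using cp by (simp add: field_simps power2_eq_square)
    finally have "b^2 / c \<le> a" by simp
    then have "b^2 \<le> a * c" using cp by (simp add: pos_divide_le_eq)
    then show ?thesis by (simp add: a_def b_def c_def)
  qed
qed

lemma inner_le_norm_op:
  fixes S :: "'a::real_inner \<Rightarrow>\<^sub>L 'a"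
  shows "inner (S x) x \<le> norm S * (norm x)^2"
proof -
  have "inner (S x) x \<le> norm (S x) * norm x" by (rule norm_cauchy_schwarz)
  also have "\<dots> \<le> norm S * norm x * norm x" by (intro mult_right_mono norm_blinfun) simp
  finally show ?thesis by (simp add: power2_eq_square mult.assoc)
qed

lemma coercive_below:
  fixes S :: "'a::real_inner \<Rightarrow>\<^sub>L 'a"
  assumes c: "c > 0" and co: "\<And>x. c * (norm x)^2 \<le> inner (S x) x"
  shows "c * norm x \<le> norm (S x)"
proof (cases "x = 0")
  case True then show ?thesis by simp
next
  case False
  have "c * norm x * norm x \<le> norm (S x) * norm x"
    using co[of x] norm_cauchy_schwarz[of "S x" x] by (simp add: power2_eq_square mult.assoc)
  then show ?thesis using False by simp
qed

lemma coercive_inv: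
  fixes S :: "'a::{real_inner,complete_space} \<Rightarrow>\<^sub>L 'a"
  assumes sa: "self_adjoint S" and c: "c > 0" and co: "\<And>x. c * (norm x)^2 \<le> inner (S x) x"
  shows "bl_invertible S"
proof -
  define K where "K = norm S + c"
  have K: "K > 0" unfolding K_def using c by (simp add: add_nonneg_pos)
  define q where "q = 1 - c / K"
  have q0: "0 \<le> q" unfolding q_def using K c by (simp add: K_def)
  have q1: "q < 1" unfolding q_def using K c by simp
  define U where "U = id_blinfun - (1/K) *\<^sub>R S"
  have Uapp: "U x = x - (1/K) *\<^sub>R S x" for x unfolding U_def by (simp add: blinfun.diff_left blinfun.scaleR_left)
  have Uin: "inner (U x) x = (norm x)^2 - inner (S x) x / K" for x
    by (simp add: Uapp inner_diff_left power2_norm_eq_inner)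
  have Upos: "0 \<le> inner (U x) x" for x
  proof -
    have "inner (S x) x \<le> K * (norm x)^2"
      using inner_le_norm_op[of S x] c unfolding K_def
      by (smt (verit) mult_right_mono zero_le_power2)
    then have "inner (S x) x / K \<le> (norm x)^2" using K by (simp add: pos_divide_le_eq mult.commute)
    then show ?thesis by (simp add: Uin)
  qed
  have Uup: "inner (U x) x \<le> q * (norm x)^2" for x
  proof -
    have "c * (norm x)^2 / K \<le> inner (S x) x / K" using co[of x] K by (simp add: divide_right_mono)
    then show ?thesis by (simp add: Uin q_def algebra_simps)
  qed
  have Usa: "self_adjoint U" unfolding self_adjoint_def
  proof (intro allI)
    fix x y
    show "inner (U x) y = inner x (U y)"
      using sa_inner[OF sa, of x y] by (simp add: Uapp inner_diff_left inner_diff_right)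
  qed
  have Unorm: "norm (U x) \<le> q * norm x" for x
  proof (cases "U x = 0")
    case True then show ?thesis using q0 by simp
  next
    case False
    define w where "w = U x"
    have "(inner w w)^2 = (inner (U x) w)^2" by (simp add: w_def)
    also have "\<dots> \<le> inner (U x) x * inner (U w) w" by (rule pos_cs[OF Usa Upos])
    also have "\<dots> \<le> (q * (norm x)^2) * (q * (norm w)^2)"
      by (intro mult_mono Uup Upos) (use q0 in auto)
    finally have h: "(inner w w)^2 \<le> (q * (norm x)^2) * (q * (norm w)^2)" .
    have ww: "inner w w = (norm w)^2" by (simp add: power2_norm_eq_inner)
    have "((norm w)^2)^2 \<le> (q * norm x)^2 * (norm w)^2"
      using h unfolding ww by (simp add: power_mult_distrib power2_eq_square mult_ac)
    moreover have "(norm w)^2 > 0" using False by (simp add: w_def)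
    ultimately have "(norm w)^2 \<le> (q * norm x)^2"
      by (intro mult_right_le_imp_le[of "(norm w)^2" "(norm w)^2"]) (simp_all only: power2_eq_square[of "(norm w)^2"])
    then have "norm w \<le> q * norm x" using q0 by (simp add: power2_le_iff_abs_le)
    then show ?thesis by (simp add: w_def)
  qed
  have surj: "\<exists>z. S z = y" for y
  proof -
    define f where "f z = U z + (1/K) *\<^sub>R y" for z
    have "\<forall>z z'. dist (f z) (f z') \<le> q * dist z z'"
    proof (intro allI)
      fix z z'
      have "dist (f z) (f z') = norm (U (z - z'))" by (simp add: f_def dist_norm blinfun.diff_right)
      also have "\<dots> \<le> q * dist z z'" using Unorm[of "z - z'"] by (simp add: dist_norm)
      finally show "dist (f z) (f z') \<le> q * dist z z'" .
    qed
    then obtain z where "f z = z" using banach_fix_type[OF q0 q1] by blast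
    then have "z - (1/K) *\<^sub>R S z + (1/K) *\<^sub>R y = z" by (simp add: f_def Uapp)
    then have "(1/K) *\<^sub>R S z = (1/K) *\<^sub>R y" by (simp add: algebra_simps) (metis)
    then have "S z = y" using K by simp
    then show ?thesis by blast
  qed
  show ?thesis by (rule bl_inv_surj_below[OF surj c coercive_below[OF c co]])
qed


lemma poly_op_upto:
  assumes "degree p \<le> n"
  shows "poly_op p T = (\<Sum>i\<le>n. coeff p i *\<^sub>R bl_pow T i)"
  unfolding poly_op_def
proof (rule sum.mono_neutral_left)
  show "\<forall>i\<in>{..n} - {..degree p}. coeff p i *\<^sub>R bl_pow T i = 0"
    by (auto simp: coeff_eq_0)
qed (use assms in auto)

lemma poly_op_apply_upto:
  assumes "degree p \<le> n"
  shows "poly_op p T x = (\<Sum>i\<le>n. coeff p i *\<^sub>R bl_pow T i x)"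
  unfolding poly_op_upto[OF assms] by (simp add: blinfun.sum_left blinfun.scaleR_left)

lemma bl_pow_Suc_apply: "bl_pow T (Suc i) x = T (bl_pow T i x)"
  by simp

lemma poly_op_pCons_apply: "poly_op (pCons a p) T x = a *\<^sub>R x + T (poly_op p T x)"
proof -
  have d: "degree (pCons a p) \<le> Suc (degree p)" by (simp add: degree_pCons_le)
  have "poly_op (pCons a p) T x = (\<Sum>i\<le>Suc (degree p). coeff (pCons a p) i *\<^sub>R bl_pow T i x)"
    by (rule poly_op_apply_upto[OF d])
  also have "\<dots> = a *\<^sub>R x + (\<Sum>i\<le>degree p. coeff p i *\<^sub>R T (bl_pow T i x))"
    by (subst sum.atMost_Suc_shift) simp
  also have "(\<Sum>i\<le>degree p. coeff p i *\<^sub>R T (bl_pow T i x)) = T (poly_op p T x)"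
    by (simp add: poly_op_apply_upto[OF order_refl] blinfun.sum_right blinfun.scaleR_right)
  finally show ?thesis .
qed

lemma poly_op_0_apply[simp]: "poly_op 0 T x = 0"
  by (simp add: poly_op_def)

lemma poly_op_0[simp]: "poly_op 0 T = 0"
  by (simp add: poly_op_def)

lemma poly_op_const: "poly_op [:a:] T = a *\<^sub>R id_blinfun"
  by (rule blinfun_eqI) (simp add: poly_op_pCons_apply blinfun.scaleR_left)

lemma poly_op_add: "poly_op (p + q) T = poly_op p T + poly_op q T"
proof -
  define n where "n = max (degree p) (degree q)"
  have "degree (p + q) \<le> n" "degree p \<le> n" "degree q \<le> n"
    unfolding n_def by (auto intro: degree_add_le)
  then show ?thesis
    by (simp add: poly_op_upto scaleR_add_left sum.distrib)
qed

lemma poly_op_smult: "poly_op (smult c p) T = c *\<^sub>R poly_op p T"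
proof -
  have "degree (smult c p) \<le> degree p" by simp
  then show ?thesis
    by (simp add: poly_op_upto[OF order_refl] poly_op_upto[of "smult c p" "degree p"] scaleR_sum_right)
qed

lemma poly_op_minus: "poly_op (- p) T = - poly_op p T"
  using poly_op_smult[of "-1" p T] by simp

lemma poly_op_diff: "poly_op (p - q) T = poly_op p T - poly_op q T"
  using poly_op_add[of p "- q" T] by (simp add: poly_op_minus)

lemma poly_op_pCons0_apply: "poly_op (pCons 0 p) T x = T (poly_op p T x)"
  by (simp add: poly_op_pCons_apply)

lemma poly_op_mult: "poly_op (p * q) T = poly_op p T o\<^sub>L poly_op q T"
proof (induction p)
  case 0
  then show ?case by simp
next
  case (pCons a p)
  show ?case
  proof (rule blinfun_eqI)
    fix x
    have "poly_op (pCons a p * q) T x = poly_op (smult a q + pCons 0 (p * q)) T x" by simp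
    also have "\<dots> = a *\<^sub>R poly_op q T x + T (poly_op (p * q) T x)"
      by (simp add: poly_op_add poly_op_smult blinfun.add_left blinfun.scaleR_left poly_op_pCons0_apply)
    also have "\<dots> = (poly_op (pCons a p) T o\<^sub>L poly_op q T) x"
      by (simp add: pCons.IH poly_op_pCons_apply)
    finally show "poly_op (pCons a p * q) T x = (poly_op (pCons a p) T o\<^sub>L poly_op q T) x" .
  qed
qed

lemma poly_op_X: "poly_op [:0, 1:] T = T"
  by (rule blinfun_eqI) (simp add: poly_op_pCons_apply)

lemma poly_op_commute: "poly_op p T o\<^sub>L poly_op q T = poly_op q T o\<^sub>L poly_op p T"
  by (metis poly_op_mult mult.commute)

lemma poly_op_commute_apply: "poly_op p T (poly_op q T x) = poly_op q T (poly_op p T x)"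
proof -
  have "(poly_op p T o\<^sub>L poly_op q T) x = (poly_op q T o\<^sub>L poly_op p T) x" by (simp only: poly_op_commute)
  then show ?thesis by simp
qed

lemma poly_op_T_commute_apply: "T (poly_op p T x) = poly_op p T (T x)"
  using poly_op_commute_apply[of "[:0,1:]" T p x] by (simp add: poly_op_X)

lemma poly_op_linear_factor: "poly_op [:- r, 1:] T = T - r *\<^sub>R id_blinfun"
  by (rule blinfun_eqI) (simp add: poly_op_pCons_apply blinfun.diff_left blinfun.scaleR_left)

lemma poly_op_sa:
  assumes sa: "self_adjoint T"
  shows "self_adjoint (poly_op p T)"
proof (induction p)
  case 0
  then show ?case by (simp add: self_adjoint_def)
next
  case (pCons a p)
  show ?case unfolding self_adjoint_def
  proof (intro allI)
    fix x y
    have "inner (poly_op (pCons a p) T x) y = a * inner x y + inner (T (poly_op p T x)) y"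
      by (simp add: poly_op_pCons_apply inner_add_left)
    also have "inner (T (poly_op p T x)) y = inner x (poly_op p T (T y))"
      using sa_inner[OF sa] sa_inner[OF pCons.IH] by simp
    also have "\<dots> = inner x (T (poly_op p T y))" by (simp add: poly_op_T_commute_apply)
    finally show "inner (poly_op (pCons a p) T x) y = inner x (poly_op (pCons a p) T y)"
      by (simp add: poly_op_pCons_apply inner_add_right)
  qed
qed


lemma bl_inv_neg: "bl_invertible S \<Longrightarrow> bl_invertible (- S)"
  unfolding bl_invertible_def
proof -
  assume "\<exists>S'. S o\<^sub>L S' = id_blinfun \<and> S' o\<^sub>L S = id_blinfun"
  then obtain S' where S': "S o\<^sub>L S' = id_blinfun" "S' o\<^sub>L S = id_blinfun" by blast
  have "(- S) o\<^sub>L (- S') = id_blinfun"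
    by (rule blinfun_eqI) (simp add: blinfun.minus_left blinfun.minus_right compose_id_apply[OF S'(1)])
  moreover have "(- S') o\<^sub>L (- S) = id_blinfun"
    by (rule blinfun_eqI) (simp add: blinfun.minus_left blinfun.minus_right compose_id_apply[OF S'(2)])
  ultimately show "\<exists>S'. - S o\<^sub>L S' = id_blinfun \<and> S' o\<^sub>L - S = id_blinfun" by blast
qed

lemma spec_iff: "t \<in> op_spectrum T \<longleftrightarrow> \<not> bl_invertible (T - t *\<^sub>R id_blinfun)"
  by (simp add: op_spectrum_def)

lemma spn:
  fixes S :: "'a::{real_inner,complete_space} \<Rightarrow>\<^sub>L 'a"
  assumes sa: "self_adjoint S" and N: "norm S > 0"
  shows "norm S \<in> op_spectrum S \<or> - norm S \<in> op_spectrum S"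
proof (rule ccontr)
  define N where "N = norm S"
  assume "\<not> (norm S \<in> op_spectrum S \<or> - norm S \<in> op_spectrum S)"
  then have i1: "bl_invertible (S - N *\<^sub>R id_blinfun)" and i2: "bl_invertible (S - (- N) *\<^sub>R id_blinfun)"
    by (auto simp: spec_iff N_def)
  define W where "W = (S - N *\<^sub>R id_blinfun) o\<^sub>L (S - (- N) *\<^sub>R id_blinfun)"
  have Wapp: "W x = S (S x) - (N^2) *\<^sub>R x" for x
    by (simp add: W_def blinfun.diff_left blinfun.diff_right blinfun.scaleR_left blinfun.scaleR_right
        blinfun.add_right blinfun.add_left power2_eq_square algebra_simps)
  have "bl_invertible W" unfolding W_def by (rule bl_inv_comp[OF i1 i2])
  then obtain c where c: "c > 0" "\<And>x. c * norm x \<le> norm (W x)" using bl_inv_bounded_below by blast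
  have Np: "N > 0" using N by (simp add: N_def)
  define r where "r = N^2 - c^2 / N^2"
  have key: "(norm (S x))^2 \<le> max r 0 * (norm x)^2" for x
  proof -
    have SS: "inner (S (S x)) x = (norm (S x))^2"
      using sa_inner[OF sa, of "S x" x] by (simp add: power2_norm_eq_inner inner_commute)
    have nSS: "norm (S (S x)) \<le> N * norm (S x)" unfolding N_def by (rule norm_blinfun)
    have "(c * norm x)^2 \<le> (norm (W x))^2"
      using c(2)[of x] c(1) by (intro power_mono) auto
    also have "(norm (W x))^2 = (norm (S (S x)))^2 - 2 * N^2 * inner (S (S x)) x + N^2 * N^2 * (norm x)^2"
    proof -
      have e: "inner (a - k *\<^sub>R x) (a - k *\<^sub>R x) = inner a a - 2 * k * inner a x + k * k * inner x x" for a k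
        by (simp add: inner_diff_left inner_diff_right inner_commute algebra_simps)
      show ?thesis unfolding power2_norm_eq_inner Wapp e by (simp add: power2_eq_square)
    qed
    also have "\<dots> \<le> (N * norm (S x))^2 - 2 * N^2 * (norm (S x))^2 + N^2 * N^2 * (norm x)^2"
      unfolding SS using nSS by (simp add: power_mono)
    finally have "c^2 * (norm x)^2 \<le> N^2 * (N^2 * (norm x)^2 - (norm (S x))^2)"
      by (simp add: power_mult_distrib algebra_simps)
    then have "c^2 * (norm x)^2 / N^2 \<le> N^2 * (norm x)^2 - (norm (S x))^2"
      using Np by (simp add: pos_divide_le_eq mult.commute)
    then have "(norm (S x))^2 \<le> r * (norm x)^2" by (simp add: r_def algebra_simps)
    also have "\<dots> \<le> max r 0 * (norm x)^2" by (intro mult_right_mono) auto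
    finally show ?thesis .
  qed
  have m0: "0 \<le> max r 0" by simp
  have "norm (S x) \<le> sqrt (max r 0) * norm x" for x
  proof (rule power2_le_imp_le)
    show "(norm (S x))^2 \<le> (sqrt (max r 0) * norm x)^2"
      using key[of x] by (simp add: power_mult_distrib real_sqrt_pow2[OF m0])
  qed simp
  then have "N \<le> sqrt (max r 0)" unfolding N_def by (intro norm_blinfun_bound) auto
  then have "N^2 \<le> (sqrt (max r 0))^2" using Np by (intro power_mono) auto
  then have "N^2 \<le> max r 0" by (simp only: real_sqrt_pow2[OF m0])
  moreover have "r < N^2" unfolding r_def using c(1) Np by simp
  moreover have "0 < N^2" using Np by simp
  ultimately show False by linarith
qed

lemma spec_empty_trivial:
  fixes S :: "'a::{real_inner,complete_space} \<Rightarrow>\<^sub>L 'a"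
  assumes sa: "self_adjoint S" and e: "op_spectrum S = {}"
  shows "(x::'a) = 0"
proof (cases "norm S > 0")
  case True
  then show ?thesis using spn[OF sa True] e by auto
next
  case False
  then have "S = 0" by simp
  moreover have "0 \<notin> op_spectrum S" using e by simp
  ultimately have "bl_invertible (0::'a \<Rightarrow>\<^sub>L 'a)" by (simp add: spec_iff)
  then obtain R :: "'a \<Rightarrow>\<^sub>L 'a" where R: "(0::'a \<Rightarrow>\<^sub>L 'a) o\<^sub>L R = id_blinfun" unfolding bl_invertible_def by blast
  have "((0::'a \<Rightarrow>\<^sub>L 'a) o\<^sub>L R) x = id_blinfun x" by (simp only: R)
  then show ?thesis by simp
qed

lemma spec_coercive:
  fixes T :: "'a::{real_inner,complete_space} \<Rightarrow>\<^sub>L 'a"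
  assumes sa: "self_adjoint T" and c: "c > 0" and co: "\<And>x. c * (norm x)^2 \<le> inner (T x) x"
  shows "op_spectrum T \<subseteq> {c .. norm T}"
proof
  fix t assume t: "t \<in> op_spectrum T"
  show "t \<in> {c .. norm T}"
  proof (rule ccontr)
    assume "t \<notin> {c .. norm T}"
    then consider "t < c" | "t > norm T" by force
    then have "bl_invertible (T - t *\<^sub>R id_blinfun)"
    proof cases
      case 1
      have sa1: "self_adjoint (T - t *\<^sub>R id_blinfun)"
        unfolding self_adjoint_def using sa_inner[OF sa]
        by (simp add: blinfun.diff_left blinfun.scaleR_left inner_diff_left inner_diff_right)
      show ?thesis
      proof (rule coercive_inv[OF sa1, of "c - t"])
        show "0 < c - t" using 1 by simp
        show "(c - t) * (norm x)^2 \<le> inner ((T - t *\<^sub>R id_blinfun) x) x" for x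
          using co[of x] by (simp add: blinfun.diff_left blinfun.scaleR_left inner_diff_left power2_norm_eq_inner algebra_simps)
      qed
    next
      case 2
      have sa1: "self_adjoint (t *\<^sub>R id_blinfun - T)"
        unfolding self_adjoint_def using sa_inner[OF sa]
        by (simp add: blinfun.diff_left blinfun.scaleR_left inner_diff_left inner_diff_right)
      have "bl_invertible (t *\<^sub>R id_blinfun - T)"
      proof (rule coercive_inv[OF sa1, of "t - norm T"])
        show "0 < t - norm T" using 2 by simp
        show "(t - norm T) * (norm x)^2 \<le> inner ((t *\<^sub>R id_blinfun - T) x) x" for x
          using inner_le_norm_op[of T x]
          by (simp add: blinfun.diff_left blinfun.scaleR_left inner_diff_left power2_norm_eq_inner algebra_simps)
      qed
      from bl_inv_neg[OF this] show ?thesis by simp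
    qed
    with t show False by (simp add: spec_iff)
  qed
qed

lemma pos_inv_coercive:
  fixes A :: "'a::{real_inner,complete_space} \<Rightarrow>\<^sub>L 'a"
  assumes sa: "self_adjoint A" and pos: "\<And>x. 0 \<le> inner (A x) x" and inv: "bl_invertible A"
  shows "\<exists>c>0. \<forall>x. c * (norm x)^2 \<le> inner (A x) x"
proof -
  obtain d where d: "d > 0" "\<And>x. d * norm x \<le> norm (A x)" using bl_inv_bounded_below[OF inv] by blast
  define K where "K = norm A + 1"
  have K: "K > 0" unfolding K_def by (simp add: add_nonneg_pos)
  have main: "(norm (A x))^2 \<le> inner (A x) x * K" for x
  proof (cases "A x = 0")
    case True then show ?thesis using pos[of x] K by simp
  next
    case False
    have "(inner (A x) (A x))^2 \<le> inner (A x) x * inner (A (A x)) (A x)" by (rule pos_cs[OF sa pos])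
    also have "\<dots> \<le> inner (A x) x * (K * (norm (A x))^2)"
    proof (intro mult_left_mono pos)
      have "inner (A (A x)) (A x) \<le> norm A * (norm (A x))^2" by (rule inner_le_norm_op)
      also have "\<dots> \<le> K * (norm (A x))^2" unfolding K_def by (intro mult_right_mono) auto
      finally show "inner (A (A x)) (A x) \<le> K * (norm (A x))^2" .
    qed
    finally have h0: "(inner (A x) (A x))^2 \<le> inner (A x) x * (K * (norm (A x))^2)" .
    have ww: "inner (A x) (A x) = (norm (A x))^2" by (simp add: power2_norm_eq_inner)
    have h: "((norm (A x))^2) * (norm (A x))^2 \<le> (inner (A x) x * K) * (norm (A x))^2"
      using h0 unfolding ww by (simp add: power2_eq_square mult_ac)
    have "(norm (A x))^2 > 0" using False by simp
    then show ?thesis using h by (rule mult_right_le_imp_le[rotated])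
  qed
  have "(d^2 / K) * (norm x)^2 \<le> inner (A x) x" for x
  proof -
    have "(d * norm x)^2 \<le> (norm (A x))^2" using d(2)[of x] d(1) by (intro power_mono) auto
    also have "\<dots> \<le> inner (A x) x * K" by (rule main)
    finally have "d^2 * (norm x)^2 \<le> inner (A x) x * K" by (simp add: power_mult_distrib)
    then show ?thesis using K by (simp add: field_simps)
  qed
  moreover have "d^2 / K > 0" using d K by simp
  ultimately show ?thesis by blast
qed


lemma cmap_mult: "map_poly complex_of_real (p * q) = map_poly of_real p * map_poly of_real q"
  by (rule poly_eqI) (simp add: coeff_map_poly coeff_mult)

lemma cmap_add: "map_poly complex_of_real (p + q) = map_poly of_real p + map_poly of_real q"
  by (rule poly_eqI) (simp add: coeff_map_poly)

lemma cpoly_real: "poly (map_poly complex_of_real p) (of_real x) = of_real (poly p x)"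
  by (induction p) (auto simp: map_poly_pCons)

lemma deg_le1_poly:
  fixes m :: "real poly"
  assumes "degree m \<le> 1"
  shows "m = [:coeff m 0, coeff m 1:]"
proof (rule poly_eqI)
  fix n show "coeff m n = coeff [:coeff m 0, coeff m 1:] n"
    using assms by (cases n) (auto simp: coeff_pCons coeff_eq_0 split: nat.split)
qed

lemma quad_factor:
  fixes q :: "real poly" and z :: complex
  assumes root: "poly (map_poly of_real q) z = 0" and im: "Im z \<noteq> 0"
  shows "[:Re z^2 + Im z^2, -2*Re z, 1:] dvd q"
proof -
  define d where "d = [:Re z^2 + Im z^2, -2*Re z, 1:]"
  define m where "m = q mod d"
  have qd: "q = q div d * d + m" unfolding m_def by simp
  have dz: "poly (map_poly complex_of_real d) z = 0"
    unfolding d_def by (simp add: map_poly_pCons complex_eq_iff power2_eq_square algebra_simps)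
  have mz: "poly (map_poly complex_of_real m) z = 0"
  proof -
    have "poly (map_poly complex_of_real q) z = poly (map_poly complex_of_real (q div d)) z * poly (map_poly complex_of_real d) z + poly (map_poly complex_of_real m) z"
      by (subst qd) (simp only: cmap_add cmap_mult poly_add poly_mult)
    then show ?thesis using root dz by simp
  qed
  have "m = 0"
  proof (rule ccontr)
    assume "m \<noteq> 0"
    have "d \<noteq> 0" unfolding d_def by simp
    have "degree d = 2" unfolding d_def by simp
    then have "degree m \<le> 1" using degree_mod_less[OF \<open>d \<noteq> 0\<close>, of q] \<open>m \<noteq> 0\<close> unfolding m_def by auto
    then have me: "m = [:coeff m 0, coeff m 1:]" by (rule deg_le1_poly)
    have "poly (map_poly complex_of_real [:coeff m 0, coeff m 1:]) z = 0" using mz me by simp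
    then have "of_real (coeff m 0) + of_real (coeff m 1) * z = 0"
      by (simp add: map_poly_pCons mult.commute)
    then have "coeff m 0 + coeff m 1 * Re z = 0" "coeff m 1 * Im z = 0"
      by (simp_all add: complex_eq_iff)
    then have "coeff m 1 = 0" "coeff m 0 = 0" using im by auto
    then have "m = 0" using me by simp
    with \<open>m \<noteq> 0\<close> show False by simp
  qed
  then show ?thesis unfolding d_def m_def by (simp add: mod_eq_0_iff_dvd)
qed

lemma quad_op_coercive:
  fixes T :: "'a::{real_inner,complete_space} \<Rightarrow>\<^sub>L 'a"
  assumes sa: "self_adjoint T"
  shows "b^2 * (norm x)^2 \<le> inner (poly_op [:a^2 + b^2, -2*a, 1:] T x) x"
proof -
  have app: "poly_op [:a^2 + b^2, -2*a, 1:] T x = (a^2 + b^2) *\<^sub>R x + (-2*a) *\<^sub>R T x + T (T x)"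
    by (simp add: poly_op_pCons_apply blinfun.add_right blinfun.scaleR_right blinfun.diff_right blinfun.minus_right)
  have TT: "inner (T (T x)) x = inner (T x) (T x)" by (simp add: sa_inner[OF sa])
  have "inner (poly_op [:a^2 + b^2, -2*a, 1:] T x) x = (a^2 + b^2) * inner x x - 2 * a * inner (T x) x + inner (T x) (T x)"
    unfolding app by (simp add: inner_add_left inner_diff_left TT)
  also have "\<dots> = inner (T x - a *\<^sub>R x) (T x - a *\<^sub>R x) + b^2 * inner x x"
    by (simp add: inner_diff_left inner_diff_right inner_commute power2_eq_square algebra_simps)
  also have "\<dots> \<ge> b^2 * (norm x)^2" by (simp add: power2_norm_eq_inner)
  finally show ?thesis .
qed

lemma bl_inv_scaleR_id: "c \<noteq> 0 \<Longrightarrow> bl_invertible (c *\<^sub>R (id_blinfun :: 'a::real_normed_vector \<Rightarrow>\<^sub>L 'a))"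
  unfolding bl_invertible_def
  by (rule exI[of _ "(1/c) *\<^sub>R id_blinfun"]) (auto intro!: blinfun_eqI simp: blinfun.scaleR_left)

lemma poly_inv:
  fixes T :: "'a::{real_inner,complete_space} \<Rightarrow>\<^sub>L 'a"
  assumes sa: "self_adjoint T" and nz: "\<And>t. t \<in> op_spectrum T \<Longrightarrow> poly q t \<noteq> 0"
  shows "bl_invertible (poly_op q T)"
  using nz
proof (induction "degree q" arbitrary: q rule: less_induct)
  case less
  show ?case
  proof (cases "q = 0")
    case True
    then have "op_spectrum T = {}" using less.prems by auto
    then have "\<forall>x::'a. x = 0" using spec_empty_trivial[OF sa] by blast
    then show ?thesis by (rule bl_inv_trivial)
  next
    case qnz: False
    show ?thesis
    proof (cases "degree q = 0")
      case True
      then obtain c where qc: "q = [:c:]" by (metis degree_eq_zeroE)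
      with qnz have "c \<noteq> 0" by simp
      then show ?thesis unfolding qc poly_op_const by (rule bl_inv_scaleR_id)
    next
      case dpos: False
      have "degree (map_poly complex_of_real q) = degree q" by (rule degree_map_poly) simp
      then have "\<not> constant (poly (map_poly complex_of_real q))" using dpos by (simp add: constant_degree)
      then obtain z where z: "poly (map_poly complex_of_real q) z = 0" using fundamental_theorem_of_algebra by blast
      show ?thesis
      proof (cases "Im z = 0")
        case True
        define r where "r = Re z"
        have "z = of_real r" unfolding r_def using True by (simp add: complex_eq_iff)
        then have "poly q r = 0" using z cpoly_real[of q r] by simp
        then have "[:-r, 1:] dvd q" by (simp add: poly_eq_0_iff_dvd)
        then obtain q1 where q1: "q = [:-r, 1:] * q1" by (elim dvdE)
        with qnz have q1nz: "q1 \<noteq> 0" by auto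
        have dq: "degree q = Suc (degree q1)"
        proof -
          have "degree ([:-r,1:] * q1) = degree [:-r,1:] + degree q1" by (rule degree_mult_eq) (use q1nz in auto)
          then show ?thesis by (simp only: q1) simp
        qed
        have rns: "r \<notin> op_spectrum T" using less.prems \<open>poly q r = 0\<close> by blast
        have i1: "bl_invertible (T - r *\<^sub>R id_blinfun)" using rns by (simp add: spec_iff)
        have i2: "bl_invertible (poly_op q1 T)"
        proof (rule less.hyps)
          show "degree q1 < degree q" using dq by simp
          show "poly q1 t \<noteq> 0" if "t \<in> op_spectrum T" for t
            using less.prems[OF that] q1 by auto
        qed
        have "poly_op q T = (T - r *\<^sub>R id_blinfun) o\<^sub>L poly_op q1 T"
          by (simp only: q1 poly_op_mult poly_op_linear_factor)
        then show ?thesis using bl_inv_comp[OF i1 i2] by simp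
      next
        case False
        define a b where "a = Re z" and "b = Im z"
        have "[:a^2 + b^2, -2*a, 1:] dvd q" unfolding a_def b_def by (rule quad_factor[OF z False])
        then obtain q1 where q1: "q = [:a^2 + b^2, -2*a, 1:] * q1" by (elim dvdE)
        with qnz have q1nz: "q1 \<noteq> 0" by auto
        have dq: "degree q = 2 + degree q1"
        proof -
          have "degree ([:a^2 + b^2, -2*a, 1:] * q1) = degree [:a^2 + b^2, -2*a, 1:] + degree q1"
            by (rule degree_mult_eq) (use q1nz in auto)
          then show ?thesis by (simp only: q1) simp
        qed
        have bnz: "b \<noteq> 0" using False b_def by simp
        have i1: "bl_invertible (poly_op [:a^2 + b^2, -2*a, 1:] T)"
        proof (rule coercive_inv[OF poly_op_sa[OF sa], of "b^2"])
          show "0 < b^2" using bnz by simp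
          show "b^2 * (norm x)^2 \<le> inner (poly_op [:a^2 + b^2, -2*a, 1:] T x) x" for x
            by (rule quad_op_coercive[OF sa])
        qed
        have i2: "bl_invertible (poly_op q1 T)"
        proof (rule less.hyps)
          show "degree q1 < degree q" using dq by simp
          show "poly q1 t \<noteq> 0" if "t \<in> op_spectrum T" for t
            using less.prems[OF that] q1 by auto
        qed
        show ?thesis using bl_inv_comp[OF i1 i2] by (simp only: q1 poly_op_mult)
      qed
    qed
  qed
qed


lemma poly_norm_bound:
  fixes T :: "'a::{real_inner,complete_space} \<Rightarrow>\<^sub>L 'a"
  assumes sa: "self_adjoint T" and e: "0 \<le> e" and b: "\<And>t. t \<in> op_spectrum T \<Longrightarrow> \<bar>poly q t\<bar> \<le> e"
  shows "norm (poly_op q T) \<le> e"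
proof (rule ccontr)
  assume "\<not> norm (poly_op q T) \<le> e"
  then have gt: "norm (poly_op q T) > e" by simp
  then have pos: "norm (poly_op q T) > 0" using e by linarith
  obtain s where s: "s \<in> op_spectrum (poly_op q T)" "\<bar>s\<bar> = norm (poly_op q T)"
    using spn[OF poly_op_sa[OF sa] pos] by (metis abs_minus_cancel abs_norm_cancel)
  have "poly_op q T - s *\<^sub>R id_blinfun = poly_op (q - [:s:]) T"
    by (simp add: poly_op_diff poly_op_const)
  then have ni: "\<not> bl_invertible (poly_op (q - [:s:]) T)" using s(1) by (simp add: spec_iff)
  then obtain t where t: "t \<in> op_spectrum T" "poly (q - [:s:]) t = 0"
    using poly_inv[OF sa, of "q - [:s:]"] by blast
  then have "poly q t = s" by simp
  with b[OF t(1)] s(2) gt show False by simp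
qed

lemma rpf_poly:
  fixes g :: "real \<Rightarrow> real"
  assumes "real_polynomial_function g"
  shows "\<exists>p. \<forall>x. g x = poly p x"
  using assms
proof (induction rule: real_polynomial_function.induct)
  case (linear f)
  then obtain c where "f = (\<lambda>x. x * c)" using real_bounded_linear by blast
  then show ?case by (intro exI[of _ "[:0, c:]"]) simp
next
  case (const c)
  then show ?case by (intro exI[of _ "[:c:]"]) simp
next
  case (add f g)
  then obtain p q where "\<forall>x. f x = poly p x" "\<forall>x. g x = poly q x" by blast
  then show ?case by (intro exI[of _ "p + q"]) simp
next
  case (mult f g)
  then obtain p q where "\<forall>x. f x = poly p x" "\<forall>x. g x = poly q x" by blast
  then show ?case by (intro exI[of _ "p * q"]) simp
qed

definition good_approx :: "real \<Rightarrow> real \<Rightarrow> (real \<Rightarrow> real) \<Rightarrow> (nat \<Rightarrow> real poly) \<Rightarrow> (nat \<Rightarrow> real) \<Rightarrow> bool" where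
  "good_approx a b f p e \<longleftrightarrow> (\<forall>n. \<forall>x\<in>{a..b}. \<bar>poly (p n) x - f x\<bar> \<le> e n) \<and> e \<longlonglongrightarrow> 0"

lemma weier_approx:
  assumes "continuous_on {a..b} f"
  shows "\<exists>p e. good_approx a b f p e"
proof -
  have "\<forall>n. \<exists>q. \<forall>x\<in>{a..b}. \<bar>poly q x - f x\<bar> \<le> 1 / real (Suc n)"
  proof
    fix n
    obtain g where g: "real_polynomial_function g" "\<And>x. x \<in> {a..b} \<Longrightarrow> \<bar>f x - g x\<bar> < 1 / real (Suc n)"
      using Stone_Weierstrass_real_polynomial_function[OF compact_Icc assms, of "1 / real (Suc n)"] by auto
    obtain q where q: "\<forall>x. g x = poly q x" using rpf_poly[OF g(1)] by blast
    show "\<exists>q. \<forall>x\<in>{a..b}. \<bar>poly q x - f x\<bar> \<le> 1 / real (Suc n)"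
      using g(2) q by (intro exI[of _ q]) (smt (verit))
  qed
  then obtain p where p: "\<forall>n. \<forall>x\<in>{a..b}. \<bar>poly (p n) x - f x\<bar> \<le> 1 / real (Suc n)" by metis
  have "(\<lambda>n. 1 / real (Suc n)) \<longlonglongrightarrow> 0"
    using LIMSEQ_inverse_real_of_nat by (simp add: inverse_eq_divide)
  then have "good_approx a b f p (\<lambda>n. 1 / real (Suc n))" using p by (simp add: good_approx_def)
  then show ?thesis by blast
qed

lemma blinfun_complete:
  fixes X :: "nat \<Rightarrow> ('a::real_normed_vector \<Rightarrow>\<^sub>L 'b::{real_normed_vector,complete_space})"
  assumes C: "Cauchy X"
  shows "convergent X"
proof -
  have "convergent (\<lambda>n. X n x)" for x
  proof (rule Cauchy_convergent, rule CauchyI)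
    fix e :: real assume e: "0 < e"
    have nx: "0 < norm x + 1" by (simp add: add_nonneg_pos)
    then obtain M where M: "\<And>m n. m \<ge> M \<Longrightarrow> n \<ge> M \<Longrightarrow> norm (X m - X n) < e / (norm x + 1)"
      using CauchyD[OF C, of "e / (norm x + 1)"] e by auto
    have "norm (X m x - X n x) < e" if "m \<ge> M" "n \<ge> M" for m n
    proof -
      have "norm (X m x - X n x) = norm ((X m - X n) x)" by (simp add: blinfun.bilinear_simps)
      also have "\<dots> \<le> norm (X m - X n) * norm x" by (rule norm_blinfun)
      also have "\<dots> \<le> e / (norm x + 1) * norm x" using M[OF that] by (intro mult_right_mono) auto
      also have "\<dots> < e" using e nx by (simp add: field_simps)
      finally show ?thesis .
    qed
    then show "\<exists>M. \<forall>m\<ge>M. \<forall>n\<ge>M. norm (X m x - X n x) < e" by blast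
  qed
  then obtain v where v: "\<And>x. (\<lambda>n. X n x) \<longlonglongrightarrow> v x"
    unfolding convergent_def by metis
  obtain M0 where M0: "\<And>m n. m \<ge> M0 \<Longrightarrow> n \<ge> M0 \<Longrightarrow> norm (X m - X n) < 1"
    using CauchyD[OF C, of 1] by auto
  define K where "K = norm (X M0) + 1"
  have Kb: "norm (X n) \<le> K" if "n \<ge> M0" for n
  proof -
    have "norm (X n) \<le> norm (X M0) + norm (X n - X M0)" by (metis add.commute diff_add_cancel norm_triangle_ineq)
    also have "\<dots> \<le> K" using M0[OF that order_refl] by (simp add: K_def)
    finally show ?thesis .
  qed
  have bl: "bounded_linear v"
  proof (rule bounded_linear_intro[where K=K])
    fix x y and r::real
    from tendsto_add[OF v[of x] v [of y]] v[of "x + y", unfolded blinfun.bilinear_simps]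
    have "v x + v y = v (x + y)" by (rule LIMSEQ_unique)
    then show "v (x + y) = v x + v y" by simp
    from tendsto_scaleR[OF tendsto_const[of r] v[of x]] v[of "r *\<^sub>R x", unfolded blinfun.bilinear_simps]
    have "r *\<^sub>R v x = v (r *\<^sub>R x)" by (rule LIMSEQ_unique)
    then show "v (r *\<^sub>R x) = r *\<^sub>R v x" by simp
    have ev: "\<forall>\<^sub>F n in sequentially. norm (X n x) \<le> norm x * K"
      using eventually_ge_at_top[of M0]
    proof eventually_elim
      case (elim n)
      have "norm (X n x) \<le> norm (X n) * norm x" by (rule norm_blinfun)
      also have "\<dots> \<le> K * norm x" using Kb[OF elim] by (intro mult_right_mono) auto
      finally show ?case by (simp add: mult.commute)
    qed
    show "norm (v x) \<le> norm x * K"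
      by (rule tendsto_upperbound[OF tendsto_norm[OF v] ev]) simp
  qed
  then have Bv: "\<And>x. (\<lambda>n. X n x) \<longlonglongrightarrow> Blinfun v x"
    by (auto simp: bounded_linear_Blinfun_apply v)
  have "X \<longlonglongrightarrow> Blinfun v"
  proof (rule LIMSEQ_I)
    fix r::real assume "r > 0"
    define r' where "r' = r / 2"
    have "0 < r'" "r' < r" using \<open>r > 0\<close> by (simp_all add: r'_def)
    from CauchyD[OF C \<open>r' > 0\<close>]
    obtain M where M: "\<And>m n. m \<ge> M \<Longrightarrow> n \<ge> M \<Longrightarrow> norm (X m - X n) < r'"
      by metis
    show "\<exists>no. \<forall>n\<ge>no. norm (X n - Blinfun v) < r"
    proof (safe intro!: exI[where x=M])
      fix n assume n: "M \<le> n"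
      have "norm (X n - Blinfun v) \<le> r'"
      proof (rule norm_blinfun_bound)
        fix x
        have ev_le: "eventually (\<lambda>m. norm (X n x - X m x) \<le> r' * norm x) sequentially"
          using eventually_ge_at_top[of M]
        proof eventually_elim
          case (elim m)
          have "norm (X n x - X m x) = norm ((X n - X m) x)"
            by (simp add: blinfun.bilinear_simps)
          also have "\<dots> \<le> norm ((X n - X m)) * norm x"
            by (rule norm_blinfun)
          also have "\<dots> \<le> r' * norm x"
            using M[OF n elim] by (simp add: mult_right_mono)
          finally show ?case .
        qed
        have tendsto_v: "(\<lambda>m. norm (X n x - X m x)) \<longlonglongrightarrow> norm (X n x - Blinfun v x)"
          by (auto intro!: tendsto_intros Bv)
        show "norm ((X n - Blinfun v) x) \<le> r' * norm x"
          by (auto intro!: tendsto_upperbound tendsto_v ev_le simp: blinfun.bilinear_simps)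
      qed (simp add: \<open>0 < r'\<close> less_imp_le)
      thus "norm (X n - Blinfun v) < r"
        using \<open>r' < r\<close> by linarith
    qed
  qed
  thus "convergent X"
    by (rule convergentI)
qed

lemma tri_help: "dist a f < d / 2 \<Longrightarrow> \<bar>b - f\<bar> \<le> e \<Longrightarrow> \<bar>a - b\<bar> \<le> d / 2 + \<bar>e\<bar>"
  for a b f d e :: real
proof -
  assume h1: "dist a f < d / 2" and h2: "\<bar>b - f\<bar> \<le> e"
  have "\<bar>a - b\<bar> = \<bar>(a - f) - (b - f)\<bar>" by simp
  also have "\<dots> \<le> \<bar>a - f\<bar> + \<bar>b - f\<bar>" by (rule abs_triangle_ineq4)
  finally have "\<bar>a - b\<bar> \<le> \<bar>a - f\<bar> + \<bar>b - f\<bar>" .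
  moreover have "\<bar>a - f\<bar> < d / 2" using h1 by (simp add: dist_real_def)
  moreover have "e \<le> \<bar>e\<bar>" by simp
  ultimately show ?thesis using h2 by linarith
qed

lemma fc_limit:
  fixes T :: "'a::{real_inner,complete_space} \<Rightarrow>\<^sub>L 'a"
  assumes sa: "self_adjoint T" and sub: "op_spectrum T \<subseteq> {a..b}" and ga: "good_approx a b f p e"
  shows "(\<lambda>n. poly_op (p n) T) \<longlonglongrightarrow> fcalc f T"
proof -
  have ap: "\<And>n x. x \<in> op_spectrum T \<Longrightarrow> \<bar>poly (p n) x - f x\<bar> \<le> e n" using ga sub unfolding good_approx_def by blast
  have e0: "e \<longlonglongrightarrow> 0" using ga unfolding good_approx_def by blast
  have ev: "\<forall>\<^sub>F n in sequentially. \<bar>e n\<bar> < d" if "d > 0" for d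
    using e0 that unfolding tendsto_iff by (simp add: dist_real_def)
  have "Cauchy (\<lambda>n. poly_op (p n) T)"
  proof (rule CauchyI)
    fix d :: real assume d: "0 < d"
    then obtain M where M: "\<And>n. n \<ge> M \<Longrightarrow> \<bar>e n\<bar> < d / 2" using ev[of "d/2"] by (auto simp: eventually_sequentially)
    have "norm (poly_op (p m) T - poly_op (p n) T) < d" if "m \<ge> M" "n \<ge> M" for m n
    proof -
      have "norm (poly_op (p m - p n) T) \<le> \<bar>e m\<bar> + \<bar>e n\<bar>"
      proof (rule poly_norm_bound[OF sa])
        show "\<bar>poly (p m - p n) t\<bar> \<le> \<bar>e m\<bar> + \<bar>e n\<bar>" if "t \<in> op_spectrum T" for t
          using ap[OF that, of m] ap[OF that, of n] by simp
      qed simp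
      also have "\<dots> < d" using M[OF that(1)] M[OF that(2)] by simp
      finally show ?thesis by (simp add: poly_op_diff)
    qed
    then show "\<exists>M. \<forall>m\<ge>M. \<forall>n\<ge>M. norm (poly_op (p m) T - poly_op (p n) T) < d" by blast
  qed
  then have "convergent (\<lambda>n. poly_op (p n) T)" by (rule blinfun_complete)
  then obtain S where S: "(\<lambda>n. poly_op (p n) T) \<longlonglongrightarrow> S" unfolding convergent_def by blast
  have PS: "(\<lambda>n. poly_op (p' n) T) \<longlonglongrightarrow> S"
    if ul: "uniform_limit (op_spectrum T) (\<lambda>n x. poly (p' n) x) f sequentially" for p'
  proof -
    have "(\<lambda>n. poly_op (p' n - p n) T) \<longlonglongrightarrow> 0"
    proof (rule LIMSEQ_I)
      fix d :: real assume d: "0 < d"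
      have ev1: "\<forall>\<^sub>F n in sequentially. \<forall>x\<in>op_spectrum T. dist (poly (p' n) x) (f x) < d / 2"
      proof -
        have "0 < d / 2" using d by simp
        then show ?thesis using ul unfolding uniform_limit_iff by blast
      qed
      obtain M1 where M1: "\<And>n x. n \<ge> M1 \<Longrightarrow> x \<in> op_spectrum T \<Longrightarrow> dist (poly (p' n) x) (f x) < d / 2"
        using ev1 by (auto simp: eventually_sequentially)
      obtain M2 where M2: "\<And>n. n \<ge> M2 \<Longrightarrow> \<bar>e n\<bar> < d / 2" using ev[of "d/2"] d by (auto simp: eventually_sequentially)
      have "norm (poly_op (p' n - p n) T - 0) < d" if "n \<ge> max M1 M2" for n
      proof -
        have "norm (poly_op (p' n - p n) T) \<le> d / 2 + \<bar>e n\<bar>"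
        proof (rule poly_norm_bound[OF sa])
          show "\<bar>poly (p' n - p n) t\<bar> \<le> d / 2 + \<bar>e n\<bar>" if "t \<in> op_spectrum T" for t
            using tri_help[OF M1[of n t] ap[OF that, of n]] that \<open>n \<ge> max M1 M2\<close> by simp
        qed (use d in simp)
        also have "\<dots> < d" using M2[of n] that by simp
        finally show ?thesis by simp
      qed
      then show "\<exists>no. \<forall>n\<ge>no. norm (poly_op (p' n - p n) T - 0) < d" by blast
    qed
    from tendsto_add[OF this S] show ?thesis by (simp add: poly_op_diff)
  qed
  have ulp: "uniform_limit (op_spectrum T) (\<lambda>n x. poly (p n) x) f sequentially"
    unfolding uniform_limit_iff
  proof (intro allI impI)
    fix d :: real assume "0 < d"
    show "\<forall>\<^sub>F n in sequentially. \<forall>x\<in>op_spectrum T. dist (poly (p n) x) (f x) < d"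
      using ev[OF \<open>0 < d\<close>]
    proof (rule eventually_mono)
      fix n assume en: "\<bar>e n\<bar> < d"
      show "\<forall>x\<in>op_spectrum T. dist (poly (p n) x) (f x) < d"
      proof
        fix x assume "x \<in> op_spectrum T"
        then have "\<bar>poly (p n) x - f x\<bar> \<le> e n" by (rule ap)
        moreover have "e n \<le> \<bar>e n\<bar>" by simp
        ultimately show "dist (poly (p n) x) (f x) < d" using en by (simp add: dist_real_def)
      qed
    qed
  qed
  have "fcalc f T = S"
    unfolding fcalc_def
  proof (rule the_equality)
    show "\<forall>p'. uniform_limit (op_spectrum T) (\<lambda>n x. poly (p' n) x) f sequentially \<longrightarrow> (\<lambda>n. poly_op (p' n) T) \<longlonglongrightarrow> S"
      using PS by blast
    fix S' assume "\<forall>p'. uniform_limit (op_spectrum T) (\<lambda>n x. poly (p' n) x) f sequentially \<longrightarrow> (\<lambda>n. poly_op (p' n) T) \<longlonglongrightarrow> S'"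
    then have "(\<lambda>n. poly_op (p n) T) \<longlonglongrightarrow> S'" using ulp by blast
    then show "S' = S" using S by (rule LIMSEQ_unique)
  qed
  then show ?thesis using S by simp
qed


lemma ga_cong: "good_approx a b f p e \<Longrightarrow> (\<And>x. x \<in> {a..b} \<Longrightarrow> f x = g x) \<Longrightarrow> good_approx a b g p e"
  unfolding good_approx_def by auto

lemma ga_add:
  assumes "good_approx a b f p e" "good_approx a b g q e'"
  shows "good_approx a b (\<lambda>x. f x + g x) (\<lambda>n. p n + q n) (\<lambda>n. e n + e' n)"
  unfolding good_approx_def
proof (intro conjI allI ballI)
  fix n x assume x: "x \<in> {a..b}"
  have "\<bar>poly (p n) x - f x\<bar> \<le> e n" "\<bar>poly (q n) x - g x\<bar> \<le> e' n"
    using assms x unfolding good_approx_def by auto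
  then show "\<bar>poly (p n + q n) x - (f x + g x)\<bar> \<le> e n + e' n" by simp
next
  show "(\<lambda>n. e n + e' n) \<longlonglongrightarrow> 0" using assms unfolding good_approx_def
    using tendsto_add by fastforce
qed

lemma ga_smult:
  assumes "good_approx a b f p e"
  shows "good_approx a b (\<lambda>x. c * f x) (\<lambda>n. smult c (p n)) (\<lambda>n. \<bar>c\<bar> * e n)"
  unfolding good_approx_def
proof (intro conjI allI ballI)
  fix n x assume x: "x \<in> {a..b}"
  have "\<bar>poly (p n) x - f x\<bar> \<le> e n" using assms x unfolding good_approx_def by auto
  then have "\<bar>c\<bar> * \<bar>poly (p n) x - f x\<bar> \<le> \<bar>c\<bar> * e n" by (intro mult_left_mono) auto
  then show "\<bar>poly (smult c (p n)) x - c * f x\<bar> \<le> \<bar>c\<bar> * e n"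
    by (simp add: abs_mult[symmetric] right_diff_distrib)
next
  have "e \<longlonglongrightarrow> 0" using assms unfolding good_approx_def by simp
  from tendsto_mult[OF tendsto_const this] show "(\<lambda>n. \<bar>c\<bar> * e n) \<longlonglongrightarrow> 0" by simp
qed

lemma ga_const: "good_approx a b (\<lambda>x. c) (\<lambda>n. [:c:]) (\<lambda>n. 0)"
  unfolding good_approx_def by simp

lemma ga_mult:
  assumes "good_approx a b f p e" "good_approx a b g q e'"
    and Bf: "\<And>x. x \<in> {a..b} \<Longrightarrow> \<bar>f x\<bar> \<le> B" and Bg: "\<And>x. x \<in> {a..b} \<Longrightarrow> \<bar>g x\<bar> \<le> B"
  shows "good_approx a b (\<lambda>x. f x * g x) (\<lambda>n. p n * q n) (\<lambda>n. \<bar>e n\<bar> * (B + \<bar>e' n\<bar>) + B * \<bar>e' n\<bar>)"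
  unfolding good_approx_def
proof (intro conjI allI ballI)
  fix n x assume x: "x \<in> {a..b}"
  define P Q F G where "P = poly (p n) x" and "Q = poly (q n) x" and "F = f x" and "G = g x"
  have h1: "\<bar>P - F\<bar> \<le> \<bar>e n\<bar>" "\<bar>Q - G\<bar> \<le> \<bar>e' n\<bar>"
    using assms x unfolding good_approx_def P_def Q_def F_def G_def by (auto intro: order_trans[OF _ abs_ge_self])
  have hF: "\<bar>F\<bar> \<le> B" and hG: "\<bar>G\<bar> \<le> B" using Bf[OF x] Bg[OF x] by (simp_all add: F_def G_def)
  have hQ: "\<bar>Q\<bar> \<le> B + \<bar>e' n\<bar>"
  proof -
    have "\<bar>Q\<bar> \<le> \<bar>G\<bar> + \<bar>Q - G\<bar>" by (metis abs_triangle_ineq add.commute diff_add_cancel)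
    then show ?thesis using hG h1(2) by linarith
  qed
  have B0: "0 \<le> B" using hF abs_ge_zero[of F] by linarith
  have "\<bar>P * Q - F * G\<bar> = \<bar>(P - F) * Q + F * (Q - G)\<bar>" by (simp add: algebra_simps)
  also have "\<dots> \<le> \<bar>P - F\<bar> * \<bar>Q\<bar> + \<bar>F\<bar> * \<bar>Q - G\<bar>" by (metis abs_mult abs_triangle_ineq)
  also have "\<dots> \<le> \<bar>e n\<bar> * (B + \<bar>e' n\<bar>) + B * \<bar>e' n\<bar>"
    by (intro add_mono mult_mono h1 hQ hF) (use B0 in auto)
  finally show "\<bar>poly (p n * q n) x - f x * g x\<bar> \<le> \<bar>e n\<bar> * (B + \<bar>e' n\<bar>) + B * \<bar>e' n\<bar>"
    by (simp add: P_def Q_def F_def G_def)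
next
  have e: "e \<longlonglongrightarrow> 0" and e': "e' \<longlonglongrightarrow> 0" using assms unfolding good_approx_def by simp_all
  have "(\<lambda>n. \<bar>e n\<bar> * (B + \<bar>e' n\<bar>) + B * \<bar>e' n\<bar>) \<longlonglongrightarrow> \<bar>0\<bar> * (B + \<bar>0\<bar>) + B * \<bar>0\<bar>"
    by (intro tendsto_intros e e')
  then show "(\<lambda>n. \<bar>e n\<bar> * (B + \<bar>e' n\<bar>) + B * \<bar>e' n\<bar>) \<longlonglongrightarrow> 0" by simp
qed

lemma cont_bound:
  assumes "continuous_on {a..b} (f :: real \<Rightarrow> real)"
  obtains B where "\<And>x. x \<in> {a..b} \<Longrightarrow> \<bar>f x\<bar> \<le> B"
proof -
  have "bounded (f ` {a..b})" by (rule compact_imp_bounded[OF compact_continuous_image[OF assms compact_Icc]])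
  then obtain B where "\<forall>y\<in>f ` {a..b}. norm y \<le> B" unfolding bounded_iff by blast
  then show ?thesis by (intro that[of B]) auto
qed

context
  fixes T :: "'a::{real_inner,complete_space} \<Rightarrow>\<^sub>L 'a" and a b :: real
  assumes sa: "self_adjoint T" and sub: "op_spectrum T \<subseteq> {a..b}"
begin

lemma fc_cong:
  assumes "continuous_on {a..b} f" "\<And>x. x \<in> {a..b} \<Longrightarrow> f x = g x"
  shows "fcalc f T = fcalc g T"
proof -
  obtain p e where ga: "good_approx a b f p e" using weier_approx[OF assms(1)] by blast
  have "(\<lambda>n. poly_op (p n) T) \<longlonglongrightarrow> fcalc f T" by (rule fc_limit[OF sa sub ga])
  moreover have "(\<lambda>n. poly_op (p n) T) \<longlonglongrightarrow> fcalc g T" by (rule fc_limit[OF sa sub ga_cong[OF ga assms(2)]])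
  ultimately show ?thesis by (rule LIMSEQ_unique)
qed

lemma fc_add:
  assumes "continuous_on {a..b} f" "continuous_on {a..b} g"
  shows "fcalc (\<lambda>x. f x + g x) T = fcalc f T + fcalc g T"
proof -
  obtain p e where ga: "good_approx a b f p e" using weier_approx[OF assms(1)] by blast
  obtain q e' where gb: "good_approx a b g q e'" using weier_approx[OF assms(2)] by blast
  have "(\<lambda>n. poly_op (p n + q n) T) \<longlonglongrightarrow> fcalc (\<lambda>x. f x + g x) T" by (rule fc_limit[OF sa sub ga_add[OF ga gb]])
  moreover have "(\<lambda>n. poly_op (p n + q n) T) \<longlonglongrightarrow> fcalc f T + fcalc g T"
    unfolding poly_op_add by (intro tendsto_add fc_limit[OF sa sub ga] fc_limit[OF sa sub gb])
  ultimately show ?thesis by (rule LIMSEQ_unique)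
qed

lemma fc_smult:
  assumes "continuous_on {a..b} f"
  shows "fcalc (\<lambda>x. c * f x) T = c *\<^sub>R fcalc f T"
proof -
  obtain p e where ga: "good_approx a b f p e" using weier_approx[OF assms(1)] by blast
  have "(\<lambda>n. poly_op (smult c (p n)) T) \<longlonglongrightarrow> fcalc (\<lambda>x. c * f x) T" by (rule fc_limit[OF sa sub ga_smult[OF ga]])
  moreover have "(\<lambda>n. poly_op (smult c (p n)) T) \<longlonglongrightarrow> c *\<^sub>R fcalc f T"
    unfolding poly_op_smult by (intro tendsto_scaleR tendsto_const fc_limit[OF sa sub ga])
  ultimately show ?thesis by (rule LIMSEQ_unique)
qed

lemma fc_const: "fcalc (\<lambda>x. c) T = c *\<^sub>R id_blinfun"
proof -
  have "(\<lambda>n. poly_op [:c:] T) \<longlonglongrightarrow> fcalc (\<lambda>x. c) T" by (rule fc_limit[OF sa sub ga_const])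
  then show ?thesis by (simp add: poly_op_const LIMSEQ_const_iff)
qed

lemma fc_mult:
  assumes "continuous_on {a..b} f" "continuous_on {a..b} g"
  shows "fcalc (\<lambda>x. f x * g x) T = fcalc f T o\<^sub>L fcalc g T"
proof -
  obtain p e where ga: "good_approx a b f p e" using weier_approx[OF assms(1)] by blast
  obtain q e' where gb: "good_approx a b g q e'" using weier_approx[OF assms(2)] by blast
  obtain B1 where B1: "\<And>x. x \<in> {a..b} \<Longrightarrow> \<bar>f x\<bar> \<le> B1" using cont_bound[OF assms(1)] by blast
  obtain B2 where B2: "\<And>x. x \<in> {a..b} \<Longrightarrow> \<bar>g x\<bar> \<le> B2" using cont_bound[OF assms(2)] by blast
  have Bf: "\<bar>f x\<bar> \<le> max B1 B2" if "x \<in> {a..b}" for x using B1[OF that] by simp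
  have Bg: "\<bar>g x\<bar> \<le> max B1 B2" if "x \<in> {a..b}" for x using B2[OF that] by simp
  have "(\<lambda>n. poly_op (p n * q n) T) \<longlonglongrightarrow> fcalc (\<lambda>x. f x * g x) T"
    by (rule fc_limit[OF sa sub ga_mult[OF ga gb Bf Bg]])
  moreover have "(\<lambda>n. poly_op (p n * q n) T) \<longlonglongrightarrow> (fcalc f T o\<^sub>L fcalc g T)"
    unfolding poly_op_mult
    by (rule bounded_bilinear.tendsto[OF bounded_bilinear_blinfun_compose fc_limit[OF sa sub ga] fc_limit[OF sa sub gb]])
  ultimately show ?thesis by (rule LIMSEQ_unique)
qed

lemma fc_sa:
  assumes "continuous_on {a..b} f"
  shows "self_adjoint (fcalc f T)"
  unfolding self_adjoint_def
proof (intro allI)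
  fix x y
  obtain p e where ga: "good_approx a b f p e" using weier_approx[OF assms(1)] by blast
  have L: "(\<lambda>n. poly_op (p n) T) \<longlonglongrightarrow> fcalc f T" by (rule fc_limit[OF sa sub ga])
  have l1: "(\<lambda>n. inner (poly_op (p n) T x) y) \<longlonglongrightarrow> inner (fcalc f T x) y"
    by (intro tendsto_inner blinfun.tendsto[OF L] tendsto_const)
  have l2: "(\<lambda>n. inner x (poly_op (p n) T y)) \<longlonglongrightarrow> inner x (fcalc f T y)"
    by (intro tendsto_inner blinfun.tendsto[OF L] tendsto_const)
  have "(\<lambda>n. inner (poly_op (p n) T x) y) = (\<lambda>n. inner x (poly_op (p n) T y))"
    using sa_inner[OF poly_op_sa[OF sa]] by simp
  with l1 l2 show "inner (fcalc f T x) y = inner x (fcalc f T y)" using LIMSEQ_unique by metis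
qed

lemma fc_pos:
  assumes "continuous_on {a..b} f" "\<And>x. x \<in> {a..b} \<Longrightarrow> 0 \<le> f x"
  shows "0 \<le> inner (fcalc f T x) x"
proof -
  have cs: "continuous_on {a..b} (\<lambda>x. sqrt (f x))" by (intro continuous_intros assms(1))
  have "fcalc f T = fcalc (\<lambda>x. sqrt (f x) * sqrt (f x)) T"
    by (rule fc_cong[OF assms(1)]) (simp add: assms(2))
  also have "\<dots> = fcalc (\<lambda>x. sqrt (f x)) T o\<^sub>L fcalc (\<lambda>x. sqrt (f x)) T" by (rule fc_mult[OF cs cs])
  finally have "inner (fcalc f T x) x = inner (fcalc (\<lambda>x. sqrt (f x)) T x) (fcalc (\<lambda>x. sqrt (f x)) T x)"
    using sa_inner[OF fc_sa[OF cs]] by simp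
  then show ?thesis by simp
qed

end


lemma cont_powr_pos: "0 < a \<Longrightarrow> continuous_on {a..b} (\<lambda>t::real. t powr r)"
  by (intro continuous_intros) auto

lemma cont_ln_pos: "0 < a \<Longrightarrow> continuous_on {a..b} (\<lambda>t::real. ln t)"
  by (intro continuous_intros) auto

definition ts_fun :: "real \<Rightarrow> int \<Rightarrow> real \<Rightarrow> real \<Rightarrow> real" where
  "ts_fun \<mu> k l t = (1/l) * t powr (\<mu> + of_int k * l) + (-(1/l)) * t powr (\<mu> + (of_int k - 1) * l)"

definition re_fun :: "real \<Rightarrow> real \<Rightarrow> real" where
  "re_fun \<nu> t = t powr \<nu> * ln t"

lemma cont_ts: "0 < a \<Longrightarrow> continuous_on {a..b} (ts_fun \<mu> k l)"
  unfolding ts_fun_def by (intro continuous_intros) auto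

lemma cont_re: "0 < a \<Longrightarrow> continuous_on {a..b} (re_fun \<nu>)"
  unfolding re_fun_def by (intro continuous_intros) auto

lemma scal:
  fixes t lam \<nu> :: real
  assumes t: "0 < t" and l: "0 < lam"
  shows "t powr \<nu> * ln t \<le> (1/lam) * t powr (\<nu> + lam) + (-(1/lam)) * t powr \<nu>"
    and "(1/lam) * t powr (\<nu> + lam) + (-(1/lam)) * t powr \<nu> \<le> t powr (\<nu> + lam) * ln t"
proof -
  define y where "y = lam * ln t"
  have tl: "t powr lam = exp y" using t by (simp add: powr_def y_def mult.commute)
  have mid: "(1/lam) * t powr (\<nu> + lam) + (-(1/lam)) * t powr \<nu> = t powr \<nu> * ((exp y - 1) / lam)"
    using l by (simp add: powr_add tl field_simps)
  have lt: "ln t = y / lam" using l by (simp add: y_def)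
  have tn: "0 < t powr \<nu>" using t by simp
  have e1: "y \<le> exp y - 1" using exp_ge_add_one_self[of y] by linarith
  have e2: "exp y - 1 \<le> y * exp y"
  proof -
    have "1 + (- y) \<le> exp (- y)" by (rule exp_ge_add_one_self)
    then have "(1 - y) * exp y \<le> exp (-y) * exp y" by (intro mult_right_mono) auto
    also have "\<dots> = 1" by (simp add: exp_minus field_simps)
    finally show ?thesis by (simp add: algebra_simps)
  qed
  show "t powr \<nu> * ln t \<le> (1/lam) * t powr (\<nu> + lam) + (-(1/lam)) * t powr \<nu>"
    unfolding mid lt using e1 l tn by (intro mult_left_mono divide_right_mono) auto
  have "t powr \<nu> * ((exp y - 1) / lam) \<le> t powr \<nu> * (exp y * (y / lam))"
  proof (intro mult_left_mono)
    have "(exp y - 1) / lam \<le> (y * exp y) / lam" using e2 l by (intro divide_right_mono) auto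
    then show "(exp y - 1) / lam \<le> exp y * (y / lam)" by (simp add: mult.commute)
  qed (use tn in auto)
  also have "\<dots> = t powr (\<nu> + lam) * ln t" by (simp add: powr_add tl lt)
  finally show "(1/lam) * t powr (\<nu> + lam) + (-(1/lam)) * t powr \<nu> \<le> t powr (\<nu> + lam) * ln t"
    unfolding mid .
qed

lemma ts_pos:
  assumes "0 < t" "0 < lam"
  shows "re_fun (\<mu> + (of_int k - 1) * lam) t \<le> ts_fun \<mu> k lam t"
    and "ts_fun \<mu> k lam t \<le> re_fun (\<mu> + of_int k * lam) t"
proof -
  have e: "\<mu> + of_int k * lam = (\<mu> + (of_int k - 1) * lam) + lam" by (simp add: algebra_simps)
  show "re_fun (\<mu> + (of_int k - 1) * lam) t \<le> ts_fun \<mu> k lam t"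
    using scal(1)[OF assms, of "\<mu> + (of_int k - 1) * lam"] unfolding ts_fun_def re_fun_def e .
  show "ts_fun \<mu> k lam t \<le> re_fun (\<mu> + of_int k * lam) t"
    using scal(2)[OF assms, of "\<mu> + (of_int k - 1) * lam"] unfolding ts_fun_def re_fun_def e .
qed

lemma ts_neg:
  assumes "0 < t" "0 < lam"
  shows "re_fun (\<mu> - of_int k * lam) t \<le> ts_fun \<mu> k (- lam) t"
    and "ts_fun \<mu> k (- lam) t \<le> re_fun (\<mu> - (of_int k - 1) * lam) t"
proof -
  have e: "ts_fun \<mu> k (- lam) t = (1/lam) * t powr ((\<mu> - of_int k * lam) + lam) + (-(1/lam)) * t powr (\<mu> - of_int k * lam)"
    unfolding ts_fun_def by (simp add: algebra_simps)
  have e2: "\<mu> - (of_int k - 1) * lam = (\<mu> - of_int k * lam) + lam" by (simp add: algebra_simps)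
  show "re_fun (\<mu> - of_int k * lam) t \<le> ts_fun \<mu> k (- lam) t"
    using scal(1)[OF assms, of "\<mu> - of_int k * lam"] unfolding e re_fun_def .
  show "ts_fun \<mu> k (- lam) t \<le> re_fun (\<mu> - (of_int k - 1) * lam) t"
    using scal(2)[OF assms, of "\<mu> - of_int k * lam"] unfolding e re_fun_def e2 .
qed

lemma fc_diff:
  fixes T :: "'a::{real_inner,complete_space} \<Rightarrow>\<^sub>L 'a"
  assumes sa: "self_adjoint T" and sub: "op_spectrum T \<subseteq> {a..b}"
    and cf: "continuous_on {a..b} f" and cg: "continuous_on {a..b} g"
  shows "fcalc (\<lambda>x. f x - g x) T = fcalc f T - fcalc g T"
proof -
  have cg': "continuous_on {a..b} (\<lambda>x. (-1) * g x)" by (intro continuous_intros cg)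
  have "fcalc (\<lambda>x. f x - g x) T = fcalc (\<lambda>x. f x + (-1) * g x) T" by simp
  also have "\<dots> = fcalc f T + fcalc (\<lambda>x. (-1) * g x) T" by (rule fc_add[OF sa sub cf cg'])
  also have "fcalc (\<lambda>x. (-1) * g x) T = (-1) *\<^sub>R fcalc g T" by (rule fc_smult[OF sa sub cg])
  finally show ?thesis by simp
qed


theorem corollary2:
  fixes A B :: "'a::{real_inner,complete_space} \<Rightarrow>\<^sub>L 'a"
    and \<mu> lam :: real
  assumes "strictly_positive A" and "strictly_positive B" and "lam > 0"
  shows "op_le (rel_entropy (\<mu> - 2*lam) A B) (tsallis \<mu> 2 (-lam) A B)
       \<and> op_le (tsallis \<mu> 2 (-lam) A B) (rel_entropy (\<mu> - lam) A B)
       \<and> op_le (rel_entropy (\<mu> - lam) A B) (tsallis \<mu> 1 (-lam) A B)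
       \<and> op_le (tsallis \<mu> 1 (-lam) A B) (rel_entropy \<mu> A B)
       \<and> op_le (rel_entropy \<mu> A B) (tsallis \<mu> 1 lam A B)
       \<and> op_le (tsallis \<mu> 1 lam A B) (rel_entropy (\<mu> + lam) A B)
       \<and> op_le (rel_entropy (\<mu> + lam) A B) (tsallis \<mu> 2 lam A B)
       \<and> op_le (tsallis \<mu> 2 lam A B) (rel_entropy (\<mu> + 2*lam) A B)"
proof -
  have saA: "self_adjoint A" and posA: "\<And>x. 0 \<le> inner (A x) x" and invA: "bl_invertible A"
    using assms(1) unfolding strictly_positive_def by auto
  have saB: "self_adjoint B" and posB: "\<And>x. 0 \<le> inner (B x) x" and invB: "bl_invertible B"
    using assms(2) unfolding strictly_positive_def by auto
  have lam: "0 < lam" by (rule assms(3))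
  obtain cA where cA: "cA > 0" "\<And>x. cA * (norm x)^2 \<le> inner (A x) x"
    using pos_inv_coercive[OF saA posA invA] by blast
  obtain cB where cB: "cB > 0" "\<And>x. cB * (norm x)^2 \<le> inner (B x) x"
    using pos_inv_coercive[OF saB posB invB] by blast
  have subA: "op_spectrum A \<subseteq> {cA .. norm A}" by (rule spec_coercive[OF saA cA(1) cA(2)])
  define Ah where "Ah = op_powr A (1/2)"
  define Aih where "Aih = op_powr A (-1/2)"
  have contA: "continuous_on {cA .. norm A} (\<lambda>t. t powr r)" for r by (rule cont_powr_pos[OF cA(1)])
  have saAh: "self_adjoint Ah" unfolding Ah_def op_powr_def by (rule fc_sa[OF saA subA contA])
  have "Ah o\<^sub>L Aih = fcalc (\<lambda>t. t powr (1/2) * t powr (-1/2)) A"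
    unfolding Ah_def Aih_def op_powr_def by (rule fc_mult[OF saA subA contA contA, symmetric])
  also have "\<dots> = fcalc (\<lambda>t. 1) A"
  proof (rule fc_cong[OF saA subA])
    show "continuous_on {cA .. norm A} (\<lambda>t. t powr (1/2) * t powr (-1/2))"
      by (intro continuous_on_mult contA)
    show "t powr (1/2) * t powr (-1/2) = 1" if "t \<in> {cA .. norm A}" for t
    proof -
      have "t > 0" using that cA(1) by simp
      then show ?thesis by (simp add: powr_add[symmetric])
    qed
  qed
  also have "\<dots> = id_blinfun" by (simp add: fc_const[OF saA subA])
  finally have AhAih: "Ah o\<^sub>L Aih = id_blinfun" .
  have AhAih_app: "Ah (Aih x) = x" for x using compose_id_apply[OF AhAih] .
  have saAih: "self_adjoint Aih" unfolding Aih_def op_powr_def by (rule fc_sa[OF saA subA contA])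
  define X where "X = inner_op A B"
  have Xapp: "X x = Aih (B (Aih x))" for x unfolding X_def inner_op_def Aih_def by simp
  have saX: "self_adjoint X" unfolding self_adjoint_def
  proof (intro allI)
    fix x y
    have "inner (X x) y = inner (B (Aih x)) (Aih y)" by (simp add: Xapp sa_inner[OF saAih])
    also have "\<dots> = inner (Aih x) (B (Aih y))" by (simp add: sa_inner[OF saB])
    also have "\<dots> = inner x (X y)" by (simp add: Xapp sa_inner[OF saAih])
    finally show "inner (X x) y = inner x (X y)" .
  qed
  define K where "K = norm Ah + 1"
  have K: "K > 0" unfolding K_def by (simp add: add_nonneg_pos)
  define cX where "cX = cB / K^2"
  have cX: "cX > 0" unfolding cX_def using cB(1) K by simp
  have coX: "cX * (norm x)^2 \<le> inner (X x) x" for x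
  proof -
    have "norm x = norm (Ah (Aih x))" by (simp add: AhAih_app)
    also have "\<dots> \<le> norm Ah * norm (Aih x)" by (rule norm_blinfun)
    also have "\<dots> \<le> K * norm (Aih x)" unfolding K_def by (intro mult_right_mono) auto
    finally have "(norm x)^2 \<le> (K * norm (Aih x))^2" by (intro power_mono) auto
    then have "cX * (norm x)^2 \<le> cX * (K * norm (Aih x))^2" using cX by (intro mult_left_mono) auto
    also have "\<dots> = cB * (norm (Aih x))^2" unfolding cX_def using K by (simp add: power_mult_distrib)
    also have "\<dots> \<le> inner (B (Aih x)) (Aih x)" by (rule cB(2))
    also have "\<dots> = inner (X x) x" by (simp add: Xapp sa_inner[OF saAih])
    finally show ?thesis .
  qed
  have subX: "op_spectrum X \<subseteq> {cX .. norm X}" by (rule spec_coercive[OF saX cX coX])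
  have tpos: "t > 0" if "t \<in> {cX .. norm X}" for t using that cX by simp
  have contX: "continuous_on {cX .. norm X} (\<lambda>t. t powr r)" for r by (rule cont_powr_pos[OF cX])
  have rel_form: "rel_entropy \<nu> A B = Ah o\<^sub>L fcalc (re_fun \<nu>) X o\<^sub>L Ah" for \<nu>
  proof -
    have "fcalc (re_fun \<nu>) X = fcalc (\<lambda>t. t powr \<nu> * ln t) X" by (simp add: re_fun_def[abs_def])
    also have "\<dots> = op_powr X \<nu> o\<^sub>L op_log X"
      unfolding op_powr_def op_log_def by (rule fc_mult[OF saX subX contX cont_ln_pos[OF cX]])
    finally have e: "fcalc (re_fun \<nu>) X = op_powr X \<nu> o\<^sub>L op_log X" .
    show ?thesis unfolding rel_entropy_def e X_def[symmetric] Ah_def[symmetric]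
      by (rule blinfun_eqI) simp
  qed
  have ts_form: "tsallis \<mu>' k l A B = Ah o\<^sub>L fcalc (ts_fun \<mu>' k l) X o\<^sub>L Ah" for \<mu>' k l
  proof -
    define \<alpha> \<beta> where "\<alpha> = \<mu>' + of_int k * l" and "\<beta> = \<mu>' + (of_int k - 1) * l"
    have c1: "continuous_on {cX .. norm X} (\<lambda>t. (1/l) * t powr \<alpha>)" by (intro continuous_intros contX)
    have c2: "continuous_on {cX .. norm X} (\<lambda>t. (-(1/l)) * t powr \<beta>)" by (intro continuous_intros contX)
    have "fcalc (ts_fun \<mu>' k l) X = fcalc (\<lambda>t. (1/l) * t powr \<alpha> + (-(1/l)) * t powr \<beta>) X"
      by (simp add: ts_fun_def[abs_def] \<alpha>_def \<beta>_def)
    also have "\<dots> = fcalc (\<lambda>t. (1/l) * t powr \<alpha>) X + fcalc (\<lambda>t. (-(1/l)) * t powr \<beta>) X"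
      by (rule fc_add[OF saX subX c1 c2])
    also have "\<dots> = (1/l) *\<^sub>R op_powr X \<alpha> + (-(1/l)) *\<^sub>R op_powr X \<beta>"
      unfolding op_powr_def by (simp only: fc_smult[OF saX subX contX])
    finally have e: "fcalc (ts_fun \<mu>' k l) X = (1/l) *\<^sub>R op_powr X \<alpha> + (-(1/l)) *\<^sub>R op_powr X \<beta>" .
    show ?thesis unfolding tsallis_def gmean_def e X_def[symmetric] Ah_def[symmetric] \<alpha>_def[symmetric] \<beta>_def[symmetric]
      by (rule blinfun_eqI) (simp add: blinfun.add_left blinfun.scaleR_left blinfun.diff_left
          blinfun.add_right blinfun.scaleR_right blinfun.diff_right algebra_simps)
  qed
  have key_le: "op_le (Ah o\<^sub>L fcalc g1 X o\<^sub>L Ah) (Ah o\<^sub>L fcalc g2 X o\<^sub>L Ah)"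
    if c1: "continuous_on {cX .. norm X} g1" and c2: "continuous_on {cX .. norm X} g2"
      and le: "\<And>t. t \<in> {cX .. norm X} \<Longrightarrow> g1 t \<le> g2 t" for g1 g2
    unfolding op_le_def
  proof (intro allI)
    fix x
    have d: "fcalc (\<lambda>t. g2 t - g1 t) X = fcalc g2 X - fcalc g1 X" by (rule fc_diff[OF saX subX c2 c1])
    have cd: "continuous_on {cX .. norm X} (\<lambda>t. g2 t - g1 t)" by (intro continuous_intros c1 c2)
    have "inner (((Ah o\<^sub>L fcalc g2 X o\<^sub>L Ah) - (Ah o\<^sub>L fcalc g1 X o\<^sub>L Ah)) x) x
        = inner (Ah (fcalc g2 X (Ah x) - fcalc g1 X (Ah x))) x"
      by (simp only: blinfun.diff_left blinfun.diff_right blinfun_apply_blinfun_compose)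
    also have "\<dots> = inner (fcalc g2 X (Ah x) - fcalc g1 X (Ah x)) (Ah x)" by (simp add: sa_inner[OF saAh])
    also have "\<dots> = inner (fcalc (\<lambda>t. g2 t - g1 t) X (Ah x)) (Ah x)" by (simp add: d blinfun.diff_left)
    also have "\<dots> \<ge> 0" by (rule fc_pos[OF saX subX cd]) (use le in auto)
    finally show "0 \<le> inner (((Ah o\<^sub>L fcalc g2 X o\<^sub>L Ah) - (Ah o\<^sub>L fcalc g1 X o\<^sub>L Ah)) x) x" .
  qed
  have cre: "continuous_on {cX .. norm X} (re_fun \<nu>)" for \<nu> by (rule cont_re[OF cX])
  have cts: "continuous_on {cX .. norm X} (ts_fun \<mu>' k l)" for \<mu>' k l by (rule cont_ts[OF cX])
  have le_rt: "op_le (rel_entropy \<nu> A B) (tsallis \<mu>' k l A B)"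
    if "\<And>t. 0 < t \<Longrightarrow> re_fun \<nu> t \<le> ts_fun \<mu>' k l t" for \<nu> \<mu>' k l
    unfolding rel_form ts_form by (rule key_le[OF cre cts]) (use that tpos in auto)
  have le_tr: "op_le (tsallis \<mu>' k l A B) (rel_entropy \<nu> A B)"
    if "\<And>t. 0 < t \<Longrightarrow> ts_fun \<mu>' k l t \<le> re_fun \<nu> t" for \<nu> \<mu>' k l
    unfolding rel_form ts_form by (rule key_le[OF cts cre]) (use that tpos in auto)
  show ?thesis
  proof (intro conjI)
    show "op_le (rel_entropy (\<mu> - 2*lam) A B) (tsallis \<mu> 2 (-lam) A B)"
      by (rule le_rt) (use ts_neg(1)[OF _ lam, of _ \<mu> 2] in simp)
    show "op_le (tsallis \<mu> 2 (-lam) A B) (rel_entropy (\<mu> - lam) A B)"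
      by (rule le_tr) (use ts_neg(2)[OF _ lam, of _ \<mu> 2] in simp)
    show "op_le (rel_entropy (\<mu> - lam) A B) (tsallis \<mu> 1 (-lam) A B)"
      by (rule le_rt) (use ts_neg(1)[OF _ lam, of _ \<mu> 1] in simp)
    show "op_le (tsallis \<mu> 1 (-lam) A B) (rel_entropy \<mu> A B)"
      by (rule le_tr) (use ts_neg(2)[OF _ lam, of _ \<mu> 1] in simp)
    show "op_le (rel_entropy \<mu> A B) (tsallis \<mu> 1 lam A B)"
      by (rule le_rt) (use ts_pos(1)[OF _ lam, of _ \<mu> 1] in simp)
    show "op_le (tsallis \<mu> 1 lam A B) (rel_entropy (\<mu> + lam) A B)"
      by (rule le_tr) (use ts_pos(2)[OF _ lam, of _ \<mu> 1] in simp)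
    show "op_le (rel_entropy (\<mu> + lam) A B) (tsallis \<mu> 2 lam A B)"
      by (rule le_rt) (use ts_pos(1)[OF _ lam, of _ \<mu> 2] in simp)
    show "op_le (tsallis \<mu> 2 lam A B) (rel_entropy (\<mu> + 2*lam) A B)"
      by (rule le_tr) (use ts_pos(2)[OF _ lam, of _ \<mu> 2] in simp)
  qed
qed


end
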